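(* Let $X$ be a Banach lattice and $S$ a convex $C_0$-semigroup on $X$. Let $(x_n)_{n\in\mathbb N}$, $(y_n)_{n\in\mathbb N}$ be sequences in $X$ with $x_n\to x\in X$ and $y_n\to y\in X$, and let $(h_n)_{n\in\mathbb N}$ be a sequence in $(0,\infty)$ with $h_n\downarrow0$. Then $S_{x_n}(h_n)y_n\to y$.
   Context: An operator $T\colon X\to X$ is convex if $T(\lambda x+(1-\lambda)y)\le\lambda Tx+(1-\lambda)Ty$ for all $x,y\in X$, $\lambda\in[0,1]$, and bounded if $\sup_{\|x\|\le r}\|Tx\|<\infty$ for all $r>0$. A convex $C_0$-semigroup is a family $(S(t))_{t\ge0}$ of bounded convex operators $X\to X$ with $S(0)=\mathrm{id}$, $S(t+s)=S(t)S(s)$ for all $s,t\ge0$, and $S(t)x\to x$ as $t\downarrow0$ for all $x$. For $t\ge0$ and $x,y\in X$, $S_x(t)y:=S(t)(x+y)-S(t)x$. *)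

theory Defs
  imports "HOL-Analysis.Analysis"
begin

class banach_lattice = banach + ordered_real_vector + lattice +
  assumes lattice_norm: "sup x (- x) \<le> sup y (- y) \<Longrightarrow> norm x \<le> norm y"

definition convex_op :: "('a::banach_lattice \<Rightarrow> 'a) \<Rightarrow> bool" where
  "convex_op T \<longleftrightarrow> (\<forall>x y. \<forall>l::real. 0 \<le> l \<and> l \<le> 1 \<longrightarrow>
      T (l *\<^sub>R x + (1 - l) *\<^sub>R y) \<le> l *\<^sub>R T x + (1 - l) *\<^sub>R T y)"

definition bounded_op :: "('a::real_normed_vector \<Rightarrow> 'b::real_normed_vector) \<Rightarrow> bool" where
  "bounded_op T \<longleftrightarrow> (\<forall>r>0. \<exists>C. \<forall>x. norm x \<le> r \<longrightarrow> norm (T x) \<le> C)"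

definition convex_C0_semigroup :: "(real \<Rightarrow> 'a::banach_lattice \<Rightarrow> 'a) \<Rightarrow> bool" where
  "convex_C0_semigroup S \<longleftrightarrow>
     (\<forall>t\<ge>0. convex_op (S t) \<and> bounded_op (S t)) \<and>
     S 0 = id \<and>
     (\<forall>s\<ge>0. \<forall>t\<ge>0. S (t + s) = S t \<circ> S s) \<and>
     (\<forall>x. ((\<lambda>t. S t x) \<longlongrightarrow> x) (at_right 0))"

definition shifted_sg :: "(real \<Rightarrow> 'a::real_vector \<Rightarrow> 'a) \<Rightarrow> 'a \<Rightarrow> real \<Rightarrow> 'a \<Rightarrow> 'a" where
  "shifted_sg S x t y = S t (x + y) - S t x"

end

theory Submission
  imports Defs
begin

lemma bl_abs_nonneg: "0 \<le> sup x (- x)" for x :: "'a::banach_lattice"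
proof -
  have "x + (- x) \<le> sup x (-x) + sup x (-x)" by (intro add_mono) auto
  hence "0 \<le> sup x (-x) + sup x (-x)" by simp
  hence "0 \<le> (2::real) *\<^sub>R sup x (-x)" by (simp add: scaleR_2)
  hence "(1/2::real) *\<^sub>R 0 \<le> (1/2::real) *\<^sub>R ((2::real) *\<^sub>R sup x (-x))"
    by (intro scaleR_left_mono) auto
  thus ?thesis by simp
qed

lemma bl_abs_pos: "0 \<le> w \<Longrightarrow> sup w (- w) = w" for w :: "'a::banach_lattice"
proof -
  assume "0 \<le> w"
  hence "- w \<le> w" by (meson neg_le_0_iff_le order_trans)
  thus ?thesis by (simp add: sup_absorb1)
qed

lemma bl_norm_abs: "norm (sup x (- x)) = norm x" for x :: "'a::banach_lattice"
proof -
  have e: "sup (sup x (- x)) (- sup x (- x)) = sup x (- x)"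
    using bl_abs_pos[OF bl_abs_nonneg] .
  show ?thesis using lattice_norm[of x "sup x (-x)"] lattice_norm[of "sup x (-x)" x] e
    by simp
qed

lemma bl_sandwich:
  fixes a b c :: "'a::banach_lattice"
  assumes "a \<le> b" "b \<le> c"
  shows "norm b \<le> norm a + norm c"
proof -
  let ?w = "sup a (-a) + sup c (-c)"
  have a0: "0 \<le> sup a (-a)" and c0: "0 \<le> sup c (-c)" by (rule bl_abs_nonneg)+
  have w0: "0 \<le> ?w" using a0 c0 by (simp add: add_nonneg_nonneg)
  have "b \<le> ?w"
  proof -
    have "b \<le> sup c (-c)" using assms(2) by (meson order_trans sup_ge1)
    also have "\<dots> \<le> ?w" using a0 by (simp add: add_increasing)
    finally show ?thesis .
  qed
  moreover have "- b \<le> ?w"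
  proof -
    have "- b \<le> - a" using assms(1) by simp
    also have "\<dots> \<le> sup a (-a)" by simp
    also have "\<dots> \<le> ?w" using c0 by (simp add: add_increasing2)
    finally show ?thesis .
  qed
  ultimately have "sup b (-b) \<le> sup ?w (- ?w)" using bl_abs_pos[OF w0] by simp
  hence "norm b \<le> norm ?w" by (rule lattice_norm)
  also have "\<dots> \<le> norm (sup a (-a)) + norm (sup c (-c))" by (rule norm_triangle_ineq)
  also have "\<dots> = norm a + norm c" by (simp add: bl_norm_abs)
  finally show ?thesis .
qed

lemma convex_onesided:
  fixes T :: "'a::banach_lattice \<Rightarrow> 'a"
  assumes cv: "convex_op T" and l: "0 < l" "l \<le> 1"
  shows "T y - T x \<le> l *\<^sub>R (T (x + (1/l) *\<^sub>R (y - x)) - T x)"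
proof -
  let ?z = "x + (1/l) *\<^sub>R (y - x)"
  have "l *\<^sub>R ?z + (1 - l) *\<^sub>R x = y" using l
    by (simp add: algebra_simps)
  moreover have "T (l *\<^sub>R ?z + (1 - l) *\<^sub>R x) \<le> l *\<^sub>R T ?z + (1 - l) *\<^sub>R T x"
    using cv l unfolding convex_op_def by auto
  ultimately have "T y \<le> l *\<^sub>R T ?z + (1 - l) *\<^sub>R T x" by simp
  hence "T y - T x \<le> l *\<^sub>R T ?z + (1 - l) *\<^sub>R T x - T x" by simp
  also have "\<dots> = l *\<^sub>R (T ?z - T x)" by (simp add: algebra_simps)
  finally show ?thesis .
qed

lemma convex_lip:
  fixes T :: "'a::banach_lattice \<Rightarrow> 'a"
  assumes cv: "convex_op T" and d: "0 < d"
    and M: "\<And>w. norm (w - c) \<le> 2 * d \<Longrightarrow> norm (T w) \<le> M"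
    and x: "norm (x - c) \<le> d" and y: "norm (y - c) \<le> d"
  shows "norm (T y - T x) \<le> 4 * M / d * norm (y - x)"
proof -
  have "norm (c - c) \<le> 2 * d" using d by simp
  hence "norm (T c) \<le> M" by (rule M)
  hence M0: "0 \<le> M" by (meson norm_ge_zero order_trans)
  define l where "l = norm (y - x) / d"
  have l0: "0 \<le> l" using d by (simp add: l_def)
  have Tx: "norm (T x) \<le> M" using M x d by auto
  have Ty: "norm (T y) \<le> M" using M y d by auto
  show ?thesis
  proof (cases "x = y")
    case True then show ?thesis by simp
  next
    case False
    hence lpos: "0 < l" using d by (simp add: l_def)
    have eq: "4 * M / d * norm (y - x) = 4 * M * l" by (simp add: l_def)
    show ?thesis
    proof (cases "l \<le> 1")
      case False
      have "norm (T y - T x) \<le> norm (T y) + norm (T x)" by (rule norm_triangle_ineq4)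
      also have "\<dots> \<le> 2 * M" using Tx Ty by simp
      also have "\<dots> \<le> 4 * M * l"
      proof -
        have "M * 1 \<le> M * l" using False M0 by (intro mult_left_mono) auto
        moreover have "4 * M * l = 4 * (M * l)" by simp
        ultimately show ?thesis using M0 by linarith
      qed
      finally show ?thesis using eq by simp
    next
      case True
      have n1: "norm ((1/l) *\<^sub>R (y - x)) = d" using lpos d \<open>x \<noteq> y\<close> by (simp add: l_def)
      have n2: "norm ((1/l) *\<^sub>R (x - y)) = d" using lpos d \<open>x \<noteq> y\<close> by (simp add: l_def norm_minus_commute)
      let ?z = "x + (1/l) *\<^sub>R (y - x)" and ?w = "y + (1/l) *\<^sub>R (x - y)"
      have "?z - c = (x - c) + (1/l) *\<^sub>R (y - x)" by (simp add: algebra_simps)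
      hence "norm (?z - c) \<le> norm (x - c) + norm ((1/l) *\<^sub>R (y - x))"
        by (metis norm_triangle_ineq)
      hence Tz: "norm (T ?z) \<le> M" using x n1 by (intro M) simp
      have "?w - c = (y - c) + (1/l) *\<^sub>R (x - y)" by (simp add: algebra_simps)
      hence "norm (?w - c) \<le> norm (y - c) + norm ((1/l) *\<^sub>R (x - y))"
        by (metis norm_triangle_ineq)
      hence Tw: "norm (T ?w) \<le> M" using y n2 by (intro M) simp
      have up: "T y - T x \<le> l *\<^sub>R (T ?z - T x)" by (rule convex_onesided[OF cv lpos True])
      have "T x - T y \<le> l *\<^sub>R (T ?w - T y)" by (rule convex_onesided[OF cv lpos True])
      hence lo: "- (l *\<^sub>R (T ?w - T y)) \<le> T y - T x" by (simp add: algebra_simps)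
      have "norm (T y - T x) \<le> norm (- (l *\<^sub>R (T ?w - T y))) + norm (l *\<^sub>R (T ?z - T x))"
        by (rule bl_sandwich[OF lo up])
      also have "\<dots> = l * norm (T ?w - T y) + l * norm (T ?z - T x)" using l0 by simp
      also have "\<dots> \<le> l * (2 * M) + l * (2 * M)"
      proof -
        have "norm (T ?w - T y) \<le> 2 * M" using Tw Ty norm_triangle_ineq4[of "T ?w" "T y"] by linarith
        moreover have "norm (T ?z - T x) \<le> 2 * M" using Tz Tx norm_triangle_ineq4[of "T ?z" "T x"] by linarith
        ultimately show ?thesis using l0 by (intro add_mono mult_left_mono) auto
      qed
      also have "\<dots> = 4 * M * l" by simp
      finally show ?thesis using eq by simp
    qed
  qed
qed

lemma lip_isCont:
  fixes f :: "'a::real_normed_vector \<Rightarrow> 'b::real_normed_vector"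
  assumes K: "\<And>y. norm (y - x0) \<le> 1 \<Longrightarrow> norm (f y - f x0) \<le> K * norm (y - x0)"
  shows "isCont f x0"
  unfolding isCont_def LIM_eq
proof (intro allI impI)
  fix r :: real assume r: "0 < r"
  define s where "s = min 1 (r / (\<bar>K\<bar> + 1))"
  have s0: "0 < s" using r by (simp add: s_def)
  show "\<exists>s>0. \<forall>x. x \<noteq> x0 \<and> norm (x - x0) < s \<longrightarrow> norm (f x - f x0) < r"
  proof (intro exI[of _ s] conjI allI impI s0)
    fix x assume x: "x \<noteq> x0 \<and> norm (x - x0) < s"
    hence "norm (x - x0) \<le> 1" by (simp add: s_def)
    hence "norm (f x - f x0) \<le> K * norm (x - x0)" by (rule K)
    also have "\<dots> \<le> \<bar>K\<bar> * norm (x - x0)" by (simp add: mult_right_mono)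
    also have "\<dots> \<le> \<bar>K\<bar> * s" using x by (simp add: mult_left_mono)
    also have "\<dots> < (\<bar>K\<bar> + 1) * s" using s0 by simp
    also have "\<dots> \<le> (\<bar>K\<bar> + 1) * (r / (\<bar>K\<bar> + 1))"
      by (intro mult_left_mono) (auto simp: s_def)
    also have "\<dots> = r" by simp
    finally show "norm (f x - f x0) < r" .
  qed
qed

lemma convex_cont:
  fixes T :: "'a::banach_lattice \<Rightarrow> 'a"
  assumes cv: "convex_op T" and bd: "bounded_op T"
  shows "continuous_on UNIV T"
proof (intro continuous_at_imp_continuous_on ballI)
  fix x0 :: 'a
  have "norm x0 + 2 > 0" by (simp add: add_nonneg_pos)
  then obtain M where M: "\<And>w. norm w \<le> norm x0 + 2 \<Longrightarrow> norm (T w) \<le> M"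
    using bd unfolding bounded_op_def by blast
  have M': "norm (T w) \<le> M" if "norm (w - x0) \<le> 2 * 1" for w
  proof -
    have "norm w \<le> norm x0 + norm (w - x0)" by (metis add.commute diff_add_cancel norm_triangle_ineq)
    thus ?thesis using that by (intro M) simp
  qed
  show "isCont T x0"
  proof (rule lip_isCont)
    fix y assume "norm (y - x0) \<le> 1"
    thus "norm (T y - T x0) \<le> 4 * M * norm (y - x0)"
      using convex_lip[OF cv zero_less_one M', where x=x0 and y=y] by simp
  qed
qed

lemma conv_half:
  fixes T :: "'a::banach_lattice \<Rightarrow> 'a"
  assumes cv: "convex_op T" and w: "w = (1/2::real) *\<^sub>R a + (1/2::real) *\<^sub>R b"
  shows "T w \<le> (1/2::real) *\<^sub>R T a + (1/2::real) *\<^sub>R T b"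
proof -
  have "T ((1/2::real) *\<^sub>R a + (1 - 1/2::real) *\<^sub>R b) \<le> (1/2::real) *\<^sub>R T a + (1 - 1/2::real) *\<^sub>R T b"
    using cv[unfolded convex_op_def, rule_format, of "1/2" a b] by simp
  moreover have "(1 - 1/2::real) = 1/2" by simp
  ultimately show ?thesis using w by simp
qed

lemma conv_half2:
  fixes T :: "'a::banach_lattice \<Rightarrow> 'a"
  assumes cv: "convex_op T" and w: "a + b = (2::real) *\<^sub>R w"
  shows "T w \<le> (1/2::real) *\<^sub>R T a + (1/2::real) *\<^sub>R T b"
proof (rule conv_half[OF cv])
  have "(1/2::real) *\<^sub>R a + (1/2::real) *\<^sub>R b = (1/2::real) *\<^sub>R (a + b)"
    by (simp only: scaleR_add_right)
  also have "\<dots> = w" using w by simp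
  finally show "w = (1/2::real) *\<^sub>R a + (1/2::real) *\<^sub>R b" by simp
qed

lemma local_bound:
  fixes T :: "'a::banach_lattice \<Rightarrow> 'a"
  assumes cv: "convex_op T"
    and K: "\<And>q. norm (q - w0) \<le> e \<Longrightarrow> norm (T q) \<le> Kb"
    and Bz: "norm (T z) \<le> Bz" and Bp: "norm (T ((2::real) *\<^sub>R z - w0)) \<le> Bp"
    and w: "norm (w - z) \<le> e / 2"
  shows "norm (T w) \<le> 2 * Bz + Bp + Kb"
proof -
  let ?p = "(2::real) *\<^sub>R z - w0"
  let ?q = "w0 + (2::real) *\<^sub>R (w - z)"
  let ?w' = "(2::real) *\<^sub>R z - w"
  let ?q' = "w0 + (2::real) *\<^sub>R (z - w)"
  have nq: "norm (?q - w0) \<le> e" using w by simp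
  have nq': "norm (?q' - w0) \<le> e" using w by (simp add: norm_minus_commute)
  have up: "T w \<le> (1/2::real) *\<^sub>R T ?p + (1/2::real) *\<^sub>R T ?q"
    by (rule conv_half2[OF cv]) (simp add: algebra_simps scaleR_2)
  have up': "T ?w' \<le> (1/2::real) *\<^sub>R T ?p + (1/2::real) *\<^sub>R T ?q'"
    by (rule conv_half2[OF cv]) (simp add: algebra_simps scaleR_2)
  have "T z \<le> (1/2::real) *\<^sub>R T w + (1/2::real) *\<^sub>R T ?w'"
    by (rule conv_half2[OF cv]) (simp add: algebra_simps scaleR_2)
  hence "(2::real) *\<^sub>R T z \<le> (2::real) *\<^sub>R ((1/2::real) *\<^sub>R T w + (1/2::real) *\<^sub>R T ?w')"
    by (intro scaleR_left_mono) auto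
  hence "(2::real) *\<^sub>R T z \<le> T w + T ?w'" by (simp add: scaleR_add_right)
  hence "(2::real) *\<^sub>R T z - T ?w' \<le> T w" by (simp add: algebra_simps)
  moreover have "(2::real) *\<^sub>R T z - ((1/2::real) *\<^sub>R T ?p + (1/2::real) *\<^sub>R T ?q') \<le> (2::real) *\<^sub>R T z - T ?w'"
    using up' by (rule diff_left_mono)
  ultimately have lo: "(2::real) *\<^sub>R T z - ((1/2::real) *\<^sub>R T ?p + (1/2::real) *\<^sub>R T ?q') \<le> T w"
    by (rule order_trans[rotated])
  have "norm (T w) \<le> norm ((2::real) *\<^sub>R T z - ((1/2::real) *\<^sub>R T ?p + (1/2::real) *\<^sub>R T ?q'))
      + norm ((1/2::real) *\<^sub>R T ?p + (1/2::real) *\<^sub>R T ?q)"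
    by (rule bl_sandwich[OF lo up])
  also have "\<dots> \<le> (2 * norm (T z) + (1/2 * norm (T ?p) + 1/2 * norm (T ?q')))
      + (1/2 * norm (T ?p) + 1/2 * norm (T ?q))"
  proof (intro add_mono)
    show "norm ((2::real) *\<^sub>R T z - ((1/2::real) *\<^sub>R T ?p + (1/2::real) *\<^sub>R T ?q'))
      \<le> 2 * norm (T z) + (1/2 * norm (T ?p) + 1/2 * norm (T ?q'))"
      by (rule order_trans[OF norm_triangle_ineq4]) (auto intro: order_trans[OF norm_triangle_ineq])
    show "norm ((1/2::real) *\<^sub>R T ?p + (1/2::real) *\<^sub>R T ?q) \<le> 1/2 * norm (T ?p) + 1/2 * norm (T ?q)"
      by (rule order_trans[OF norm_triangle_ineq]) simp
  qed
  also have "\<dots> \<le> 2 * Bz + Bp + Kb" using Bz Bp K[OF nq] K[OF nq'] by simp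
  finally show ?thesis .
qed

theorem corollary2p6:
  fixes S :: "real \<Rightarrow> 'a::banach_lattice \<Rightarrow> 'a"
    and xs ys :: "nat \<Rightarrow> 'a" and x y :: 'a and h :: "nat \<Rightarrow> real"
  assumes "convex_C0_semigroup S"
    and "xs \<longlonglongrightarrow> x" and "ys \<longlonglongrightarrow> y"
    and "\<And>n. h n > 0" and "decseq h" and "h \<longlonglongrightarrow> 0"
  shows "(\<lambda>n. shifted_sg S (xs n) (h n) (ys n)) \<longlonglongrightarrow> y"
proof -
  define T where "T n = S (h n)" for n
  have cvT: "convex_op (T n)" and bdT: "bounded_op (T n)" for n
    using assms(1,4) unfolding convex_C0_semigroup_def T_def by (auto simp: less_imp_le)
  have contT: "continuous_on UNIV (T n)" for n by (rule convex_cont[OF cvT bdT])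
  have hlim: "filterlim h (at_right 0) sequentially"
    using assms(4,6) by (intro tendsto_imp_filterlim_at_right) auto
  have ptw: "(\<lambda>n. T n w) \<longlonglongrightarrow> w" for w
  proof -
    have "((\<lambda>t. S t w) \<longlongrightarrow> w) (at_right 0)" using assms(1) unfolding convex_C0_semigroup_def by blast
    from filterlim_compose[OF this hlim] show ?thesis by (simp add: T_def)
  qed
  have pb: "\<exists>B. \<forall>n. norm (T n w) \<le> B" for w
  proof -
    have "Bseq (\<lambda>n. T n w)" using ptw[of w] by (intro convergent_imp_Bseq) (auto simp: convergent_def)
    thus ?thesis by (rule BseqE) blast
  qed
  define F where "F k = {w. \<forall>n. norm (T n w) \<le> real k}" for k :: nat
  have clF: "closed (F k)" for k
  proof -
    have "F k = (\<Inter>n. {w. norm (T n w) \<le> real k})" by (auto simp: F_def)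
    moreover have "closed {w. norm (T n w) \<le> real k}" for n
      by (intro closed_Collect_le continuous_on_norm contT continuous_on_const)
    ultimately show ?thesis by auto
  qed
  have covF: "(\<Union>k. F k) = UNIV"
  proof -
    have "w \<in> (\<Union>k. F k)" for w
    proof -
      obtain B where B: "\<forall>n. norm (T n w) \<le> B" using pb by blast
      have "B \<le> real (nat \<lceil>B\<rceil>)" by linarith
      hence "w \<in> F (nat \<lceil>B\<rceil>)" using B by (auto simp: F_def intro: order_trans)
      thus ?thesis by blast
    qed
    thus ?thesis by blast
  qed
  have "\<exists>k. interior (F k) \<noteq> {}"
  proof (rule ccontr)
    assume "\<not> ?thesis"
    hence "\<And>G. G \<in> range F \<Longrightarrow> closedin euclidean G \<and> euclidean interior_of G = {}"
      using clF by (auto simp: closed_closedin[symmetric])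
    hence "euclidean interior_of \<Union>(range F) = {}"
      by (intro Baire_category_alt) (auto simp: completely_metrizable_space_euclidean)
    thus False using covF by simp
  qed
  then obtain k w0 where "w0 \<in> interior (F k)" by blast
  then obtain e where e: "0 < e" "cball w0 e \<subseteq> interior (F k)"
    using open_contains_cball open_interior by blast
  have K: "norm (T n q) \<le> real k" if "norm (q - w0) \<le> e" for n q
  proof -
    have "q \<in> cball w0 e" using that by (simp add: dist_norm norm_minus_commute)
    hence "q \<in> F k" using e interior_subset by blast
    thus ?thesis by (simp add: F_def)
  qed
  have conv: "(\<lambda>n. T n (zs n)) \<longlonglongrightarrow> z" if zs: "zs \<longlonglongrightarrow> z" for zs z
  proof -
    obtain Bz where Bz: "\<forall>n. norm (T n z) \<le> Bz" using pb by blast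
    obtain Bp where Bp: "\<forall>n. norm (T n ((2::real) *\<^sub>R z - w0)) \<le> Bp" using pb by blast
    define M where "M = 2 * Bz + Bp + real k"
    define d where "d = e / 4"
    have d0: "0 < d" using e by (simp add: d_def)
    have Mb: "norm (T n w) \<le> M" if "norm (w - z) \<le> 2 * d" for n w
      unfolding M_def
      by (rule local_bound[OF cvT K]) (use Bz Bp that in \<open>auto simp: d_def\<close>)
    have ev: "eventually (\<lambda>n. norm (T n (zs n) - T n z) \<le> 4 * M / d * norm (zs n - z)) sequentially"
    proof -
      have "eventually (\<lambda>n. dist (zs n) z < d) sequentially" using zs d0 by (rule tendstoD)
      thus ?thesis
      proof (rule eventually_mono)
        fix n assume "dist (zs n) z < d"
        hence "norm (zs n - z) \<le> d" by (simp add: dist_norm)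
        thus "norm (T n (zs n) - T n z) \<le> 4 * M / d * norm (zs n - z)"
          using convex_lip[OF cvT[of n] d0 Mb[where n=n], where x=z and y="zs n"] d0 by simp
      qed
    qed
    have "(\<lambda>n. 4 * M / d * norm (zs n - z)) \<longlonglongrightarrow> 0"
    proof -
      have "(\<lambda>n. zs n - z) \<longlonglongrightarrow> 0" using zs by (rule LIM_zero)
      hence "(\<lambda>n. norm (zs n - z)) \<longlonglongrightarrow> 0" by (rule tendsto_norm_zero)
      thus ?thesis by (rule tendsto_mult_right_zero)
    qed
    with ev have "(\<lambda>n. T n (zs n) - T n z) \<longlonglongrightarrow> 0" by (rule Lim_null_comparison)
    hence "(\<lambda>n. (T n (zs n) - T n z) + T n z) \<longlonglongrightarrow> 0 + z" by (intro tendsto_add ptw)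
    thus ?thesis by simp
  qed
  have "(\<lambda>n. T n (xs n + ys n)) \<longlonglongrightarrow> x + y" by (intro conv tendsto_add assms(2,3))
  moreover have "(\<lambda>n. T n (xs n)) \<longlonglongrightarrow> x" by (intro conv assms(2))
  ultimately have "(\<lambda>n. T n (xs n + ys n) - T n (xs n)) \<longlonglongrightarrow> (x + y) - x" by (rule tendsto_diff)
  thus ?thesis by (simp add: shifted_sg_def T_def)
qed

end
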